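(* The labelled rule (C), with premise $\Gamma, \mathbf{k}\leq \Diamond^{b}\mathbf{j} \vdash \Diamond \mathbf{k}\leq \mathbf{m}, \Delta$ and conclusion $\Gamma, \mathbf{h}\leq \Diamond\mathbf{j} \vdash \Diamond^{b}\mathbf{h}\leq \mathbf{m}, \Delta$ (where $\mathbf{k}$ does not occur in $\Gamma,\Delta$), is sound on the canonical extension $\mathbb{A}^\delta$ of any $\mathcal{L}$-algebra $\mathbb{A}$ such that $\mathbb{A}\models \Diamond\Box p\leq\Box\Diamond p$.
   Context: An $\mathcal{L}$-algebra is a bounded lattice with a finitely join-preserving $\Diamond$ and finitely meet-preserving $\Box$; its canonical extension $\mathbb{A}^\delta=(L^\delta,\Box^\pi,\Diamond^\sigma)$ is complete, with $\Diamond^\sigma$ having a right adjoint $\blacksquare$ and $\Box^\pi$ having a left adjoint denoted $\Diamond^{b}$ ($\Diamond^{b}u\leq v$ iff $u\leq\Box v$). Nominals range over a completely join-generating subset and conominals over a completely meet-generating subset of $\mathbb{A}^\delta$. A sequent $\Gamma\vdash\Delta$ of inequalities (labelled formulas such as $\mathbf{j}\leq A$, $A\leq\mathbf{m}$ and pure structures such as $\mathbf{j}\leq\mathbf{T}$, $\mathbf{T}\leq\mathbf{m}$) is interpreted as: every assignment of proposition variables, nominals and conominals satisfying all inequalities in $\Gamma$ satisfies some inequality in $\Delta$. Soundness uses that the axiom (C) is canonical (hence valid on $\mathbb{A}^\delta$) and that on $\mathbb{A}^\delta$ it is equivalent to $\forall\mathbf{j}\forall\mathbf{m}(\Diamond\Diamond^{b}\mathbf{j}\leq\mathbf{m}\Rightarrow\Diamond^{b}\Diamond\mathbf{j}\leq\mathbf{m})$.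 *)

theory Defs
  imports Main
begin

definition L_algebra :: "('a::bounded_lattice \<Rightarrow> 'a) \<Rightarrow> ('a \<Rightarrow> 'a) \<Rightarrow> bool" where
  "L_algebra dia box \<longleftrightarrow>
     dia bot = bot \<and> (\<forall>a b. dia (sup a b) = sup (dia a) (dia b)) \<and>
     box top = top \<and> (\<forall>a b. box (inf a b) = inf (box a) (box b))"

definition closed_elems :: "('a \<Rightarrow> 'c::complete_lattice) \<Rightarrow> 'c set" where
  "closed_elems e = {Inf (e ` S) | S. True}"

definition open_elems :: "('a \<Rightarrow> 'c::complete_lattice) \<Rightarrow> 'c set" where
  "open_elems e = {Sup (e ` S) | S. True}"

definition canonical_extension :: "('a::bounded_lattice \<Rightarrow> 'c::complete_lattice) \<Rightarrow> bool" where
  "canonical_extension e \<longleftrightarrow>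
     inj e \<and> e bot = bot \<and> e top = top \<and>
     (\<forall>a b. e (sup a b) = sup (e a) (e b)) \<and> (\<forall>a b. e (inf a b) = inf (e a) (e b)) \<and>
     (\<forall>u. (\<exists>S \<subseteq> closed_elems e. u = Sup S) \<and> (\<exists>S \<subseteq> open_elems e. u = Inf S)) \<and>
     (\<forall>S T. Inf (e ` S) \<le> Sup (e ` T) \<longrightarrow>
        (\<exists>S' T'. finite S' \<and> S' \<subseteq> S \<and> finite T' \<and> T' \<subseteq> T \<and> Inf (e ` S') \<le> Sup (e ` T')))"

definition sigma_ext :: "('a::bounded_lattice \<Rightarrow> 'c::complete_lattice) \<Rightarrow> ('a \<Rightarrow> 'a) \<Rightarrow> 'c \<Rightarrow> 'c" where
  "sigma_ext e f u = Sup {Inf {e (f a) | a. k \<le> e a} | k. k \<in> closed_elems e \<and> k \<le> u}"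

definition pi_ext :: "('a::bounded_lattice \<Rightarrow> 'c::complete_lattice) \<Rightarrow> ('a \<Rightarrow> 'a) \<Rightarrow> 'c \<Rightarrow> 'c" where
  "pi_ext e g u = Inf {Sup {e (g a) | a. e a \<le> w} | w. w \<in> open_elems e \<and> u \<le> w}"

text \<open>left adjoint of box^pi (diamond^b): diab u \<le> v iff u \<le> box^pi v\<close>
definition diab :: "('a::bounded_lattice \<Rightarrow> 'c::complete_lattice) \<Rightarrow> ('a \<Rightarrow> 'a) \<Rightarrow> 'c \<Rightarrow> 'c" where
  "diab e box u = Inf {v. u \<le> pi_ext e box v}"

definition join_generating :: "'c::complete_lattice set \<Rightarrow> bool" where
  "join_generating J \<longleftrightarrow> (\<forall>u. \<exists>S \<subseteq> J. u = Sup S)"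

definition meet_generating :: "'c::complete_lattice set \<Rightarrow> bool" where
  "meet_generating M \<longleftrightarrow> (\<forall>u. \<exists>S \<subseteq> M. u = Inf S)"

record 'c asg =
  pv :: "nat \<Rightarrow> 'c"
  nom :: "nat \<Rightarrow> 'c"
  conom :: "nat \<Rightarrow> 'c"

definition admissible :: "'c set \<Rightarrow> 'c set \<Rightarrow> 'c asg \<Rightarrow> bool" where
  "admissible J M \<sigma> \<longleftrightarrow> range (nom \<sigma>) \<subseteq> J \<and> range (conom \<sigma>) \<subseteq> M"

text \<open>An inequality is represented semantically by its truth condition on assignments.\<close>
definition seq_valid :: "'c set \<Rightarrow> 'c set \<Rightarrow> ('c asg \<Rightarrow> bool) set \<Rightarrow> ('c asg \<Rightarrow> bool) set \<Rightarrow> bool" where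
  "seq_valid J M \<Gamma> \<Delta> \<longleftrightarrow>
     (\<forall>\<sigma>. admissible J M \<sigma> \<longrightarrow> (\<forall>g\<in>\<Gamma>. g \<sigma>) \<longrightarrow> (\<exists>d\<in>\<Delta>. d \<sigma>))"

text \<open>The nominal with index k does not occur in an inequality: its truth value does not
  depend on the value assigned to k.\<close>
definition nom_free :: "'c set \<Rightarrow> nat \<Rightarrow> ('c asg \<Rightarrow> bool) \<Rightarrow> bool" where
  "nom_free J k \<phi> \<longleftrightarrow>
     (\<forall>\<sigma> x. x \<in> J \<longrightarrow> (\<phi> (\<sigma>\<lparr>nom := (nom \<sigma>)(k := x)\<rparr>) \<longleftrightarrow> \<phi> \<sigma>))"

end

theory Submission
  imports Defs
begin

lemma fin_ub:
  fixes P :: "'a::bounded_lattice set"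
  assumes "finite A" "A \<subseteq> P" "bot \<in> P" "\<And>a b. a \<in> P \<Longrightarrow> b \<in> P \<Longrightarrow> sup a b \<in> P"
  shows "\<exists>a\<in>P. \<forall>x\<in>A. x \<le> a"
  using assms(1,2)
proof (induction A rule: finite_induct)
  case empty then show ?case using assms(3) by blast
next
  case (insert y A)
  then obtain a where "a \<in> P" "\<forall>x\<in>A. x \<le> a" by blast
  moreover have "sup y a \<in> P" using insert(4) \<open>a \<in> P\<close> assms(4) by simp
  moreover have "\<forall>x\<in>insert y A. x \<le> sup y a" using \<open>\<forall>x\<in>A. x \<le> a\<close> by (auto intro: le_supI2)
  ultimately show ?case by blast
qed

lemma fin_lb:
  fixes P :: "'a::bounded_lattice set"
  assumes "finite A" "A \<subseteq> P" "top \<in> P" "\<And>a b. a \<in> P \<Longrightarrow> b \<in> P \<Longrightarrow> inf a b \<in> P"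
  shows "\<exists>a\<in>P. \<forall>x\<in>A. a \<le> x"
  using assms(1,2)
proof (induction A rule: finite_induct)
  case empty then show ?case using assms(3) by blast
next
  case (insert y A)
  then obtain a where "a \<in> P" "\<forall>x\<in>A. a \<le> x" by blast
  moreover have "inf y a \<in> P" using insert(4) \<open>a \<in> P\<close> assms(4) by simp
  moreover have "\<forall>x\<in>insert y A. inf y a \<le> x" using \<open>\<forall>x\<in>A. a \<le> x\<close> by (auto intro: le_infI2)
  ultimately show ?case by blast
qed

theorem mainTheorem3:
  fixes dia box :: "'a::bounded_lattice \<Rightarrow> 'a"
    and e :: "'a \<Rightarrow> 'c::complete_lattice"
    and J M :: "'c set"
    and \<Gamma> \<Delta> :: "('c asg \<Rightarrow> bool) set"
    and j k h m :: nat
  assumes "L_algebra dia box"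
    and "canonical_extension e"
    and "join_generating J"
    and "meet_generating M"
    and "\<forall>p. dia (box p) \<le> box (dia p)"
    and "k \<noteq> j"
    and "\<forall>\<phi>\<in>\<Gamma> \<union> \<Delta>. nom_free J k \<phi>"
    and "seq_valid J M
           (\<Gamma> \<union> {\<lambda>\<sigma>. nom \<sigma> k \<le> diab e box (nom \<sigma> j)})
           ({\<lambda>\<sigma>. sigma_ext e dia (nom \<sigma> k) \<le> conom \<sigma> m} \<union> \<Delta>)"
  shows "seq_valid J M
           (\<Gamma> \<union> {\<lambda>\<sigma>. nom \<sigma> h \<le> sigma_ext e dia (nom \<sigma> j)})
           ({\<lambda>\<sigma>. diab e box (nom \<sigma> h) \<le> conom \<sigma> m} \<union> \<Delta>)"
proof -
  have L: "dia bot = bot" "\<And>a b. dia (sup a b) = sup (dia a) (dia b)"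
     "box top = top" "\<And>a b. box (inf a b) = inf (box a) (box b)"
    using assms(1) unfolding L_algebra_def by auto
  have CE: "inj e" "e bot = bot" "e top = top" "\<And>a b. e (sup a b) = sup (e a) (e b)"
     "\<And>a b. e (inf a b) = inf (e a) (e b)"
    using assms(2) unfolding canonical_extension_def by auto
  have dens_cl: "\<And>u. \<exists>S \<subseteq> closed_elems e. u = Sup S"
   and dens_op: "\<And>u. \<exists>S \<subseteq> open_elems e. u = Inf S"
    using assms(2) unfolding canonical_extension_def by auto
  have compact: "\<And>S T. Inf (e ` S) \<le> Sup (e ` T) \<Longrightarrow>
        (\<exists>S' T'. finite S' \<and> S' \<subseteq> S \<and> finite T' \<and> T' \<subseteq> T \<and> Inf (e ` S') \<le> Sup (e ` T'))"
    using assms(2) unfolding canonical_extension_def by blast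
  have emono: "\<And>x y. x \<le> y \<Longrightarrow> e x \<le> e y"
  proof -
    fix x y :: 'a assume "x \<le> y"
    then have "inf x y = x" by (rule inf_absorb1)
    then have "inf (e x) (e y) = e x" using CE(5)[of x y, symmetric] by simp
    then show "e x \<le> e y" by (simp add: le_iff_inf)
  qed
  have erefl: "\<And>x y. e x \<le> e y \<Longrightarrow> x \<le> y"
  proof -
    fix x y assume "e x \<le> e y"
    then have "e (inf x y) = e x" using CE(5) by (simp add: inf.absorb1)
    then have "inf x y = x" using CE(1) by (simp add: inj_eq)
    then show "x \<le> y" by (simp add: le_iff_inf)
  qed
  have box_mono: "\<And>x y. x \<le> y \<Longrightarrow> box x \<le> box y"
  proof -
    fix x y :: 'a assume "x \<le> y"
    then have "inf x y = x" by (rule inf_absorb1)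
    then have "inf (box x) (box y) = box x" using L(4)[of x y, symmetric] by simp
    then show "box x \<le> box y" by (simp add: le_iff_inf)
  qed
  have dia_mono: "\<And>x y. x \<le> y \<Longrightarrow> dia x \<le> dia y"
  proof -
    fix x y :: 'a assume "x \<le> y"
    then have "sup x y = y" by (rule sup_absorb2)
    then have "sup (dia x) (dia y) = dia y" using L(2)[of x y, symmetric] by simp
    then show "dia x \<le> dia y" by (simp add: le_iff_sup)
  qed
  define D where "D = sigma_ext e dia"
  define B where "B = pi_ext e box"
  define b where "b = diab e box"
  define P where "P w = Sup {e (box a) | a. e a \<le> w}" for w
  define Dcl where "Dcl c = Inf {e (dia a) | a. c \<le> e a}" for c
  have D_eq: "\<And>u. D u = Sup {Dcl c | c. c \<in> closed_elems e \<and> c \<le> u}"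
    unfolding D_def sigma_ext_def Dcl_def by simp
  have B_eq: "\<And>u. B u = Inf {P w | w. w \<in> open_elems e \<and> u \<le> w}"
    unfolding B_def pi_ext_def P_def by simp
  have B_mono: "\<And>u v. u \<le> v \<Longrightarrow> B u \<le> B v"
  proof -
    fix u v :: 'c assume uv: "u \<le> v"
    have "\<And>w. v \<le> w \<Longrightarrow> u \<le> w" using uv by (rule order_trans)
    then show "B u \<le> B v" unfolding B_eq by (intro Inf_superset_mono) blast
  qed
  have B_le_P: "\<And>oo. oo \<in> open_elems e \<Longrightarrow> B oo \<le> P oo"
    unfolding B_eq by (rule Inf_lower) auto
  have key: "D jj \<le> B mm" if F: "\<forall>x\<in>J. x \<le> b jj \<longrightarrow> D x \<le> mm" for jj mm
  proof -
    have "D jj \<le> P w" if w: "w \<in> open_elems e" "mm \<le> w" for w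
    proof -
      obtain W where Ww: "w = Sup (e ` W)" using w(1) unfolding open_elems_def by auto
      have "Dcl c \<le> P w" if c: "c \<in> closed_elems e" "c \<le> jj" for c
      proof -
        obtain C0 where C0: "c = Inf (e ` C0)" using c(1) unfolding closed_elems_def by auto
        define K0 where "K0 = {a. c \<le> e (box a)}"
        define kk where "kk = Inf (e ` K0)"
        define Aw where "Aw = {a. e (dia a) \<le> w}"
        have step1: "kk \<le> b jj"
          unfolding b_def diab_def
        proof (rule Inf_greatest)
          fix v assume "v \<in> {v. jj \<le> pi_ext e box v}"
          then have jv: "jj \<le> B v" unfolding B_def by simp
          obtain OS where OS: "OS \<subseteq> open_elems e" "v = Inf OS" using dens_op by blast
          show "kk \<le> v" unfolding OS(2)
          proof (rule Inf_greatest)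
            fix oo assume oO: "oo \<in> OS"
            have "v \<le> oo" using OS oO by (simp add: Inf_lower)
            have "oo \<in> open_elems e" using OS(1) oO by blast
            have "c \<le> jj" by fact
            also have "\<dots> \<le> B v" by fact
            also have "\<dots> \<le> B oo" using B_mono[OF \<open>v \<le> oo\<close>] .
            also have "\<dots> \<le> P oo" using B_le_P[OF \<open>oo \<in> open_elems e\<close>] .
            finally have "c \<le> P oo" .
            moreover have "{e (box a) | a. e a \<le> oo} = e ` (box ` {a. e a \<le> oo})" by blast
            ultimately have "Inf (e ` C0) \<le> Sup (e ` (box ` {a. e a \<le> oo}))"
              unfolding P_def C0 by simp
            from compact[OF this] obtain C' T' where CT: "finite C'" "C' \<subseteq> C0" "finite T'"
                "T' \<subseteq> box ` {a. e a \<le> oo}" "Inf (e ` C') \<le> Sup (e ` T')"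
              by blast
            obtain A' where A': "A' \<subseteq> {a. e a \<le> oo}" "finite A'" "T' = box ` A'"
              using CT(3,4) by (meson finite_subset_image)
            obtain a' where a': "a' \<in> {a. e a \<le> oo}" "\<forall>x\<in>A'. x \<le> a'"
              using fin_ub[OF A'(2) A'(1)] CE(2,4) by auto
            have "c \<le> Inf (e ` C')" unfolding C0 using CT(2) by (intro Inf_superset_mono image_mono)
            also have "\<dots> \<le> Sup (e ` T')" by fact
            also have "\<dots> \<le> e (box a')" unfolding A'(3)
              using a'(2) by (auto intro!: Sup_least emono box_mono)
            finally have "a' \<in> K0" unfolding K0_def by simp
            then have "kk \<le> e a'" unfolding kk_def by (simp add: Inf_lower)
            then show "kk \<le> oo" using a'(1) by simp
          qed
        qed
        have step2: "kk \<le> Sup (e ` Aw)"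
        proof -
          obtain S where S: "S \<subseteq> J" "kk = Sup S"
            using assms(3) unfolding join_generating_def by blast
          show ?thesis unfolding S(2)
          proof (rule Sup_least)
            fix x assume xS: "x \<in> S"
            have "x \<le> kk" using S xS by (simp add: Sup_upper)
            then have "x \<le> b jj" using step1 by (rule order_trans)
            moreover have "x \<in> J" using S(1) xS by blast
            ultimately have "D x \<le> mm" using F by blast
            then have Dx: "D x \<le> w" using w(2) by (rule order_trans)
            obtain Dx where Dxs: "Dx \<subseteq> closed_elems e" "x = Sup Dx" using dens_cl by blast
            show "x \<le> Sup (e ` Aw)" unfolding Dxs(2)
            proof (rule Sup_least)
              fix d assume dD: "d \<in> Dx"
              have dcl: "d \<in> closed_elems e" using dD Dxs by auto
              have "d \<le> x" using Dxs dD by (simp add: Sup_upper)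
              have "Dcl d \<le> D x" unfolding D_eq using dcl \<open>d \<le> x\<close>
                by (intro Sup_upper) auto
              then have "Dcl d \<le> w" using Dx by simp
              moreover have "{e (dia a) | a. d \<le> e a} = e ` (dia ` {a. d \<le> e a})" by blast
              ultimately have "Inf (e ` (dia ` {a. d \<le> e a})) \<le> Sup (e ` W)"
                unfolding Dcl_def Ww by simp
              from compact[OF this] obtain S' T' where ST: "finite S'" "S' \<subseteq> dia ` {a. d \<le> e a}" "finite T'"
                  "T' \<subseteq> W" "Inf (e ` S') \<le> Sup (e ` T')"
                by blast
              obtain A0 where A0: "A0 \<subseteq> {a. d \<le> e a}" "finite A0" "S' = dia ` A0"
                using ST(1,2) by (meson finite_subset_image)
              obtain a0 where a0: "a0 \<in> {a. d \<le> e a}" "\<forall>y\<in>A0. a0 \<le> y"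
                using fin_lb[OF A0(2) A0(1)] CE(3,5) by auto
              have "e (dia a0) \<le> Inf (e ` S')" unfolding A0(3)
                using a0(2) by (auto intro!: Inf_greatest emono dia_mono)
              also have "\<dots> \<le> Sup (e ` T')" by fact
              also have "\<dots> \<le> w" unfolding Ww using ST(4) by (intro Sup_subset_mono image_mono)
              finally have "a0 \<in> Aw" unfolding Aw_def by simp
              then have "e a0 \<le> Sup (e ` Aw)" by (simp add: Sup_upper)
              then show "d \<le> Sup (e ` Aw)" using a0(1) by simp
            qed
          qed
        qed
        then have "Inf (e ` K0) \<le> Sup (e ` Aw)" unfolding kk_def .
        from compact[OF this] obtain K' A' where KA: "finite K'" "K' \<subseteq> K0" "finite A'" "A' \<subseteq> Aw"
            "Inf (e ` K') \<le> Sup (e ` A')"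
          by blast
        have Aw_sup: "\<And>x y. x \<in> Aw \<Longrightarrow> y \<in> Aw \<Longrightarrow> sup x y \<in> Aw"
          unfolding Aw_def using L(2) CE(4) by simp
        obtain a where a: "a \<in> Aw" "\<forall>x\<in>A'. x \<le> a"
          using fin_ub[OF KA(3) KA(4)] Aw_sup L(1) CE(2) unfolding Aw_def by auto
        have K0_inf: "\<And>x y. x \<in> K0 \<Longrightarrow> y \<in> K0 \<Longrightarrow> inf x y \<in> K0"
          unfolding K0_def using L(4) CE(5) by simp
        obtain a1 where a1: "a1 \<in> K0" "\<forall>x\<in>K'. a1 \<le> x"
          using fin_lb[OF KA(1) KA(2)] K0_inf L(3) CE(3) unfolding K0_def by auto
        have "e a1 \<le> Inf (e ` K')" using a1(2) by (auto intro!: Inf_greatest emono)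
        also have "\<dots> \<le> Sup (e ` A')" by fact
        also have "\<dots> \<le> e a" using a(2) by (auto intro!: Sup_least emono)
        finally have "a1 \<le> a" by (rule erefl)
        then have "e (box a1) \<le> e (box a)" by (intro emono box_mono)
        moreover have "c \<le> e (box a1)" using a1(1) unfolding K0_def by simp
        ultimately have cba: "c \<le> e (box a)" by (rule order_trans[rotated])
        have "Dcl c \<le> e (dia (box a))" unfolding Dcl_def using cba by (intro Inf_lower) auto
        also have "\<dots> \<le> e (box (dia a))" using assms(5) emono by simp
        also have "\<dots> \<le> P w" unfolding P_def using a(1) unfolding Aw_def
          by (intro Sup_upper) auto
        finally show ?thesis .
      qed
      then show ?thesis unfolding D_eq by (auto intro!: Sup_least)
    qed
    then show ?thesis unfolding B_eq by (auto intro!: Inf_greatest)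
  qed
  show ?thesis unfolding seq_valid_def
  proof (intro allI impI)
    fix \<sigma> :: "'c asg" assume adm: "admissible J M \<sigma>"
      and G: "\<forall>g\<in>\<Gamma> \<union> {\<lambda>\<sigma>. nom \<sigma> h \<le> sigma_ext e dia (nom \<sigma> j)}. g \<sigma>"
    show "\<exists>d\<in>{\<lambda>\<sigma>. diab e box (nom \<sigma> h) \<le> conom \<sigma> m} \<union> \<Delta>. d \<sigma>"
    proof (rule ccontr)
      assume nd: "\<not> ?thesis"
      have nD: "\<forall>d\<in>\<Delta>. \<not> d \<sigma>"
      proof (intro ballI notI)
        fix d assume "d \<in> \<Delta>" "d \<sigma>"
        then have "\<exists>d\<in>{\<lambda>\<sigma>. diab e box (nom \<sigma> h) \<le> conom \<sigma> m} \<union> \<Delta>. d \<sigma>" by blast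
        with nd show False by contradiction
      qed
      have nb: "\<not> diab e box (nom \<sigma> h) \<le> conom \<sigma> m" using nd by simp
      have F: "\<forall>x\<in>J. x \<le> b (nom \<sigma> j) \<longrightarrow> D x \<le> conom \<sigma> m"
      proof (intro ballI impI)
        fix x assume xJ: "x \<in> J" and xb: "x \<le> b (nom \<sigma> j)"
        define \<sigma>' where "\<sigma>' = \<sigma>\<lparr>nom := (nom \<sigma>)(k := x)\<rparr>"
        have adm': "admissible J M \<sigma>'" using adm xJ unfolding admissible_def \<sigma>'_def by auto
        have nf: "\<And>g. g \<in> \<Gamma> \<union> \<Delta> \<Longrightarrow> g \<sigma>' = g \<sigma>"
          using assms(7) xJ unfolding nom_free_def \<sigma>'_def by blast
        have G': "\<forall>g\<in>\<Gamma> \<union> {\<lambda>\<sigma>. nom \<sigma> k \<le> diab e box (nom \<sigma> j)}. g \<sigma>'"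
        proof
          fix g assume gG: "g \<in> \<Gamma> \<union> {\<lambda>\<sigma>. nom \<sigma> k \<le> diab e box (nom \<sigma> j)}"
          show "g \<sigma>'"
          proof (cases "g \<in> \<Gamma>")
            case True
            then have "g \<sigma>" using G by blast
            then show ?thesis using nf[of g] True by blast
          next
            case False
            then have gd: "g = (\<lambda>\<sigma>. nom \<sigma> k \<le> diab e box (nom \<sigma> j))" using gG by blast
            have "nom \<sigma>' k = x" "nom \<sigma>' j = nom \<sigma> j" using assms(6) unfolding \<sigma>'_def by simp_all
            then show ?thesis unfolding gd using xb unfolding b_def by simp
          qed
        qed
        have sv: "admissible J M \<sigma>' \<Longrightarrow> (\<forall>g\<in>\<Gamma> \<union> {\<lambda>\<sigma>. nom \<sigma> k \<le> diab e box (nom \<sigma> j)}. g \<sigma>') \<Longrightarrow>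
             (\<exists>d\<in>{\<lambda>\<sigma>. sigma_ext e dia (nom \<sigma> k) \<le> conom \<sigma> m} \<union> \<Delta>. d \<sigma>')"
          using assms(8) unfolding seq_valid_def by (elim allE impE) 
        from sv[OF adm' G'] obtain d where d: "d \<in> {\<lambda>\<sigma>. sigma_ext e dia (nom \<sigma> k) \<le> conom \<sigma> m} \<union> \<Delta>" "d \<sigma>'" ..
        show "D x \<le> conom \<sigma> m"
        proof (cases "d \<in> \<Delta>")
          case True
          then have "d \<sigma>" using nf[of d] d(2) by simp
          then show ?thesis using nD True by blast
        next
          case False then show ?thesis using d unfolding \<sigma>'_def D_def by auto
        qed
      qed
      have "nom \<sigma> h \<le> D (nom \<sigma> j)" using G unfolding D_def by auto
      also have "\<dots> \<le> B (conom \<sigma> m)" using key[OF F] .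
      finally have "diab e box (nom \<sigma> h) \<le> conom \<sigma> m"
        unfolding diab_def B_def by (intro Inf_lower) auto
      then show False using nb by simp
    qed
  qed
qed

end
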